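(* From any (code for a) computable tree $T\subseteq 2^{<\omega}$ one may uniformly compute a (code for a) computable function $f_T:[0,1]\to[0,1]$ such that: (1) $f_T$ is continuous and increasing with $f_T(x)\ge x$ for all $x$; (2) $f_T(x)=x$ if and only if $x\in\{0,1\}$, or $x\in\mathcal{C}$ and $c^{-1}(x)\in[T]$.
   Context: $2^{<\omega}$ is the set of finite binary strings; a tree is a subset of $2^{<\omega}$ closed under initial segments, and it is computable if it is a computable set under a standard computable coding of strings by natural numbers. $[T]$ is the set of $X\in 2^\omega$ all of whose finite initial segments lie in $T$. $\mathcal{C}\subseteq[0,1]$ is the set of $x$ whose ternary expansion begins with digit $1$ and continues using only digits $0$ and $2$; for $X\in 2^\omega$, $c(X)$ is the unique $x\in\mathcal{C}$ whose first ternary digit is $1$ and whose $(n+1)$st ternary digit (after the point, counting the first as digit $0$... i.e. the digit following the $n$ digits after the leading $1$) is $2X(n)$. A code for a continuous $f:[0,1]\to[0,1]$ consists of Cauchy names (rational approximations within $2^{-n}$ for every $n$) of $f(q)$ for each rational $q\in[0,1]$ together with a modulus of uniform continuity $d:\mathbb{N}\to\mathbb{N}$ ($|x-y|<2^{-d(m)}\Rightarrow |f(x)-f(y)|<2^{-m}$); $f$ is computable if it has a computable code. "Uniformly compute" means there is a single algorithm which, given a code for $T$, produces a code for $f_T$. *)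

theory Defs
  imports "HOL-Analysis.Analysis" "HOL-Library.Nat_Bijection"
begin

datatype prog =
    Zero
  | Succ
  | Proj nat
  | Oracle
  | Comp prog "prog list"
  | Prim prog prog
  | Mn prog

inductive ev :: "(nat \<Rightarrow> nat) \<Rightarrow> prog \<Rightarrow> nat list \<Rightarrow> nat \<Rightarrow> bool" for g where
  ev_zero: "ev g Zero xs 0"
| ev_succ: "ev g Succ (x # xs) (Suc x)"
| ev_proj: "i < length xs \<Longrightarrow> ev g (Proj i) xs (xs ! i)"
| ev_oracle: "ev g Oracle (x # xs) (g x)"
| ev_comp: "list_all2 (\<lambda>q y. ev g q xs y) qs ys \<Longrightarrow> ev g f ys z \<Longrightarrow> ev g (Comp f qs) xs z"
| ev_prim0: "ev g f xs y \<Longrightarrow> ev g (Prim f h) (0 # xs) y"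
| ev_primS: "ev g (Prim f h) (n # xs) r \<Longrightarrow> ev g h (n # r # xs) y \<Longrightarrow> ev g (Prim f h) (Suc n # xs) y"
| ev_mn: "ev g f (n # xs) 0 \<Longrightarrow> (\<forall>m<n. \<exists>y. y > 0 \<and> ev g f (m # xs) y) \<Longrightarrow> ev g (Mn f) xs n"

text \<open>A total function nat => nat is computable if some program (without using the oracle,
  here fixed to the constant-0 oracle) computes it.\<close>
definition computable_fun :: "(nat \<Rightarrow> nat) \<Rightarrow> bool" where
  "computable_fun h \<longleftrightarrow> (\<exists>p. \<forall>x. ev (\<lambda>_. 0) p [x] (h x))"

fun str_code :: "bool list \<Rightarrow> nat" where
  "str_code [] = 0"
| "str_code (b # bs) = 2 * str_code bs + (if b then 2 else 1)"

definition is_tree :: "bool list set \<Rightarrow> bool" where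
  "is_tree T \<longleftrightarrow> (\<forall>s\<in>T. \<forall>n. take n s \<in> T)"

definition chi :: "bool list set \<Rightarrow> nat \<Rightarrow> nat" where
  "chi T n = (if \<exists>s\<in>T. str_code s = n then 1 else 0)"

definition computable_tree :: "bool list set \<Rightarrow> bool" where
  "computable_tree T \<longleftrightarrow> is_tree T \<and> computable_fun (chi T)"

definition paths :: "bool list set \<Rightarrow> (nat \<Rightarrow> bool) set" where
  "paths T = {X. \<forall>n. map X [0..<n] \<in> T}"

definition cantor :: "(nat \<Rightarrow> bool) \<Rightarrow> real" where
  "cantor X = 1/3 + (\<Sum>n. (if X n then 2 else 0) / 3 ^ (n + 2))"

definition cantor_set :: "real set" where
  "cantor_set = range cantor"

definition rat_of_code :: "nat \<Rightarrow> real" where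
  "rat_of_code n = (case prod_decode n of (a, b) \<Rightarrow> real_of_int (int_decode a) / real (b + 1))"

definition is_code :: "(real \<Rightarrow> real) \<Rightarrow> (nat \<Rightarrow> nat \<Rightarrow> nat) \<Rightarrow> (nat \<Rightarrow> nat) \<Rightarrow> bool" where
  "is_code f A D \<longleftrightarrow>
     (\<forall>i n. rat_of_code i \<in> {0..1} \<longrightarrow> \<bar>rat_of_code (A i n) - f (rat_of_code i)\<bar> \<le> 1 / 2 ^ n) \<and>
     (\<forall>m x y. x \<in> {0..1} \<longrightarrow> y \<in> {0..1} \<longrightarrow> \<bar>x - y\<bar> < 1 / 2 ^ D m \<longrightarrow> \<bar>f x - f y\<bar> < 1 / 2 ^ m)"

end

theory Submission
  imports Defs
begin


definition PR :: "nat \<Rightarrow> ((nat \<Rightarrow> nat) \<Rightarrow> nat list \<Rightarrow> nat) \<Rightarrow> bool" where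
  "PR n F \<longleftrightarrow> (\<exists>p. \<forall>g xs. length xs = n \<longrightarrow> ev g p xs (F g xs))"

primrec nrec :: "nat \<Rightarrow> (nat \<Rightarrow> nat \<Rightarrow> nat) \<Rightarrow> nat \<Rightarrow> nat" where
  "nrec b s 0 = b"
| "nrec b s (Suc m) = s m (nrec b s m)"

lemma PR_cong: "PR n F \<Longrightarrow> (\<And>g xs. length xs = n \<Longrightarrow> F g xs = G g xs) \<Longrightarrow> PR n G"
proof -
  assume a: "PR n F" and b: "\<And>g xs. length xs = n \<Longrightarrow> F g xs = G g xs"
  from a obtain p where "\<forall>g xs. length xs = n \<longrightarrow> ev g p xs (F g xs)" unfolding PR_def by blast
  with b show ?thesis unfolding PR_def by (intro exI[of _ p]) simp
qed

lemma PR_zero: "PR n (\<lambda>g xs. 0)"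
  unfolding PR_def by (blast intro: ev_zero)

lemma PR_proj: "i < n \<Longrightarrow> PR n (\<lambda>g xs. xs ! i)"
  unfolding PR_def by (blast intro: ev_proj)

lemma PR_list:
  assumes "\<forall>F\<in>set Fs. PR n F"
  shows "\<exists>ps. \<forall>g xs. length xs = n \<longrightarrow> list_all2 (\<lambda>q y. ev g q xs y) ps (map (\<lambda>F. F g xs) Fs)"
  using assms
proof (induction Fs)
  case Nil then show ?case by auto
next
  case (Cons F Fs)
  then obtain ps where ps: "\<forall>g xs. length xs = n \<longrightarrow> list_all2 (\<lambda>q y. ev g q xs y) ps (map (\<lambda>F. F g xs) Fs)" by auto
  from Cons.prems obtain p where p: "\<forall>g xs. length xs = n \<longrightarrow> ev g p xs (F g xs)" unfolding PR_def by auto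
  show ?case by (rule exI[of _ "p # ps"]) (use p ps in auto)
qed

lemma PR_comp:
  assumes "PR m H" "length Fs = m" "\<forall>F\<in>set Fs. PR n F"
  shows "PR n (\<lambda>g xs. H g (map (\<lambda>F. F g xs) Fs))"
proof -
  obtain ps where ps: "\<forall>g xs. length xs = n \<longrightarrow> list_all2 (\<lambda>q y. ev g q xs y) ps (map (\<lambda>F. F g xs) Fs)"
    using PR_list[OF assms(3)] by auto
  obtain h where h: "\<forall>g xs. length xs = m \<longrightarrow> ev g h xs (H g xs)" using assms(1) unfolding PR_def by auto
  show ?thesis unfolding PR_def
  proof (intro exI[of _ "Comp h ps"] allI impI)
    fix g and xs :: "nat list" assume "length xs = n"
    then show "ev g (Comp h ps) xs (H g (map (\<lambda>F. F g xs) Fs))"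
      using ps h assms(2) by (intro ev_comp[where ys="map (\<lambda>F. F g xs) Fs"]) auto
  qed
qed

lemma PR_prim:
  assumes "PR n B" "PR (Suc (Suc n)) S"
  shows "PR (Suc n) (\<lambda>g ys. nrec (B g (tl ys)) (\<lambda>m r. S g (m # r # tl ys)) (hd ys))"
proof -
  obtain pb where pb: "\<forall>g xs. length xs = n \<longrightarrow> ev g pb xs (B g xs)" using assms(1) unfolding PR_def by auto
  obtain ps where ps: "\<forall>g xs. length xs = Suc (Suc n) \<longrightarrow> ev g ps xs (S g xs)" using assms(2) unfolding PR_def by auto
  have "ev g (Prim pb ps) (x # xs) (nrec (B g xs) (\<lambda>m r. S g (m # r # xs)) x)" if "length xs = n" for g x xs
    by (induction x) (use pb ps that in \<open>auto intro: ev_prim0 ev_primS\<close>)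
  then show ?thesis unfolding PR_def
    by (intro exI[of _ "Prim pb ps"] allI impI) (case_tac xs; simp)
qed

lemma PR_perm:
  assumes "PR m H" "length idx = m" "\<forall>i\<in>set idx. i < n"
  shows "PR n (\<lambda>g ys. H g (map ((!) ys) idx))"
proof -
  have "PR n (\<lambda>g xs. H g (map (\<lambda>F. F g xs) (map (\<lambda>i g ys. ys ! i) idx)))"
    by (rule PR_comp[OF assms(1)]) (use assms in \<open>auto intro: PR_proj\<close>)
  then show ?thesis by (simp add: comp_def)
qed

lemma PR_let:
  assumes "PR (Suc n) F" "PR n E"
  shows "PR n (\<lambda>g xs. F g (E g xs # xs))"
proof -
  have "PR n (\<lambda>g xs. F g (map (\<lambda>F. F g xs) (E # map (\<lambda>i g ys. ys ! i) [0..<n])))"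
    by (rule PR_comp[OF assms(1)]) (use assms in \<open>auto intro: PR_proj\<close>)
  then show ?thesis
  proof (rule PR_cong)
    fix g and xs :: "nat list" assume l: "length xs = n"
    show "F g (map (\<lambda>F. F g xs) (E # map (\<lambda>i g ys. ys ! i) [0..<n])) = F g (E g xs # xs)"
      using map_nth[of xs] by (simp add: l comp_def)
  qed
qed

lemma map_nth_drop: "length ys = k + n \<Longrightarrow> map ((!) ys) [k..<k+n] = drop k ys"
  by (intro nth_equalityI) auto

lemma PR_drop:
  assumes "PR n G"
  shows "PR (k + n) (\<lambda>g ys. G g (drop k ys))"
proof -
  have "PR (k+n) (\<lambda>g ys. G g (map ((!) ys) [k..<k+n]))"
    by (rule PR_perm[OF assms]) auto
  then show ?thesis
  proof (rule PR_cong)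
    fix g and ys :: "nat list" assume "length ys = k + n"
    then have "map ((!) ys) [k..<k+n] = drop k ys"
      by (intro nth_equalityI) auto
    then show "G g (map ((!) ys) [k..<k + n]) = G g (drop k ys)" by simp
  qed
qed

lemma PR_rec:
  assumes "PR n B" "PR (Suc (Suc n)) S" "PR n E"
  shows "PR n (\<lambda>g xs. nrec (B g xs) (\<lambda>m r. S g (m # r # xs)) (E g xs))"
proof -
  have "PR n (\<lambda>g xs. (\<lambda>g ys. nrec (B g (tl ys)) (\<lambda>m r. S g (m # r # tl ys)) (hd ys)) g (E g xs # xs))"
    by (rule PR_let[OF PR_prim[OF assms(1,2)] assms(3)])
  then show ?thesis by simp
qed

lemma nrec_add: "nrec b (\<lambda>m r. Suc r) x = x + b" by (induction x) simp_all
lemma nrec_mult: "nrec 0 (\<lambda>m r. r + c) x = x * c" by (induction x) simp_all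
lemma nrec_pred: "nrec 0 (\<lambda>m r. m) x = x - 1" by (induction x) simp_all
lemma nrec_sub: "nrec x (\<lambda>m r. r - 1) y = x - y" by (induction y) simp_all
lemma nrec_sub1: "nrec x (\<lambda>m r. r - Suc 0) y = x - y" by (induction y) simp_all
lemma nrec_pow1: "nrec (Suc 0) (\<lambda>m r. r * c) x = c ^ x" by (induction x) simp_all
lemma nrec_pow: "nrec 1 (\<lambda>m r. r * c) x = c ^ x" by (induction x) simp_all
lemma nrec_if: "nrec a (\<lambda>m r. c) x = (if x = 0 then a else c)" by (cases x) simp_all
lemma nrec_sum: "nrec 0 (\<lambda>m r. h m + r) x = (\<Sum>j<x. h j)" by (induction x) simp_all

lemma PR_succ: "PR n F \<Longrightarrow> PR n (\<lambda>g xs. Suc (F g xs))"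
proof -
  assume a: "PR n F"
  have "PR 1 (\<lambda>g xs. Suc (xs ! 0))" unfolding PR_def
    by (rule exI[of _ Succ]) (metis One_nat_def ev_succ length_Suc_conv nth_Cons_0)
  from PR_comp[OF this, of "[F]"] a show ?thesis by simp
qed

lemma PR_oracle: "PR n F \<Longrightarrow> PR n (\<lambda>g xs. g (F g xs))"
proof -
  assume a: "PR n F"
  have "PR 1 (\<lambda>g xs. g (xs ! 0))" unfolding PR_def
    by (rule exI[of _ Oracle]) (metis One_nat_def ev_oracle length_Suc_conv nth_Cons_0)
  from PR_comp[OF this, of "[F]"] a show ?thesis by simp
qed

lemma PR_const: "PR n (\<lambda>g xs. c)"
  by (induction c) (auto intro: PR_zero PR_succ)

lemma PR_drop2: "PR n G \<Longrightarrow> PR (Suc (Suc n)) (\<lambda>g ys. G g (drop 2 ys))"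
  using PR_drop[of n G 2] by simp

lemma PR_p0: "PR (Suc (Suc n)) (\<lambda>g ys. ys ! 0)" by (rule PR_proj) simp
lemma PR_p1: "PR (Suc (Suc n)) (\<lambda>g ys. ys ! 1)" by (rule PR_proj) simp

lemma PR_add: assumes "PR n F" "PR n G" shows "PR n (\<lambda>g xs. F g xs + G g xs)"
proof -
  have "PR n (\<lambda>g xs. nrec (G g xs) (\<lambda>m r. (\<lambda>g ys. Suc (ys ! 1)) g (m # r # xs)) (F g xs))"
    by (rule PR_rec[OF assms(2) _ assms(1)]) (intro PR_succ PR_p1)
  then show ?thesis by (rule PR_cong) (simp add: nrec_add nrec_mult nrec_pred nrec_sub nrec_pow nrec_sub1 nrec_pow1 nrec_if nrec_sum)
qed

lemma PR_mult: assumes "PR n F" "PR n G" shows "PR n (\<lambda>g xs. F g xs * G g xs)"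
proof -
  have "PR n (\<lambda>g xs. nrec 0 (\<lambda>m r. (\<lambda>g ys. ys ! 1 + G g (drop 2 ys)) g (m # r # xs)) (F g xs))"
    by (rule PR_rec[OF PR_const _ assms(1)]) (intro PR_add PR_p1 PR_drop2 assms(2))
  then show ?thesis by (rule PR_cong) (simp add: nrec_add nrec_mult nrec_pred nrec_sub nrec_pow nrec_sub1 nrec_pow1 nrec_if nrec_sum)
qed

lemma PR_pred: assumes "PR n F" shows "PR n (\<lambda>g xs. F g xs - 1)"
proof -
  have "PR n (\<lambda>g xs. nrec 0 (\<lambda>m r. (\<lambda>g ys. ys ! 0) g (m # r # xs)) (F g xs))"
    by (rule PR_rec[OF PR_const PR_p0 assms(1)])
  then show ?thesis by (rule PR_cong) (simp add: nrec_add nrec_mult nrec_pred nrec_sub nrec_pow nrec_sub1 nrec_pow1 nrec_if nrec_sum)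
qed

lemma PR_sub: assumes "PR n F" "PR n G" shows "PR n (\<lambda>g xs. F g xs - G g xs)"
proof -
  have "PR n (\<lambda>g xs. nrec (F g xs) (\<lambda>m r. (\<lambda>g ys. ys ! 1 - 1) g (m # r # xs)) (G g xs))"
    by (rule PR_rec[OF assms(1) _ assms(2)]) (intro PR_pred PR_p1)
  then show ?thesis by (rule PR_cong) (simp add: nrec_add nrec_mult nrec_pred nrec_sub nrec_pow nrec_sub1 nrec_pow1 nrec_if nrec_sum)
qed

lemma PR_pow: assumes "PR n F" "PR n G" shows "PR n (\<lambda>g xs. F g xs ^ G g xs)"
proof -
  have "PR n (\<lambda>g xs. nrec 1 (\<lambda>m r. (\<lambda>g ys. ys ! 1 * F g (drop 2 ys)) g (m # r # xs)) (G g xs))"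
    by (rule PR_rec[OF PR_const _ assms(2)]) (intro PR_mult PR_p1 PR_drop2 assms(1))
  then show ?thesis by (rule PR_cong) (simp add: nrec_add nrec_mult nrec_pred nrec_sub nrec_pow nrec_sub1 nrec_pow1 nrec_if nrec_sum)
qed

lemma PR_if: assumes "PR n C" "PR n F" "PR n G"
  shows "PR n (\<lambda>g xs. if C g xs = 0 then F g xs else G g xs)"
proof -
  have "PR n (\<lambda>g xs. nrec (F g xs) (\<lambda>m r. (\<lambda>g ys. G g (drop 2 ys)) g (m # r # xs)) (C g xs))"
    by (rule PR_rec[OF assms(2) _ assms(1)]) (intro PR_drop2 assms(3))
  then show ?thesis by (rule PR_cong) (simp add: nrec_if)
qed

lemma PR_sum: assumes "PR (Suc n) H" "PR n E"
  shows "PR n (\<lambda>g xs. \<Sum>j<E g xs. H g (j # xs))"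
proof -
  have h2: "PR (Suc (Suc n)) (\<lambda>g ys. H g (map ((!) ys) (0 # [2..<n+2])))"
    by (rule PR_perm[OF assms(1)]) auto
  have h3: "PR (Suc (Suc n)) (\<lambda>g ys. H g (ys ! 0 # drop 2 ys))"
  proof (rule PR_cong[OF h2])
    fix g and ys :: "nat list" assume "length ys = Suc (Suc n)"
    then have "map ((!) ys) [2..<2+n] = drop 2 ys"
      by (intro map_nth_drop) simp
    then have "map ((!) ys) (0 # [2..<n+2]) = ys ! 0 # drop 2 ys"
      by (simp add: add.commute)
    then show "H g (map ((!) ys) (0 # [2..<n + 2])) = H g (ys ! 0 # drop 2 ys)" by simp
  qed
  have "PR n (\<lambda>g xs. nrec 0 (\<lambda>m r. (\<lambda>g ys. H g (ys ! 0 # drop 2 ys) + ys ! 1) g (m # r # xs)) (E g xs))"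
    by (rule PR_rec[OF PR_const _ assms(2)]) (intro PR_add PR_p1 h3)
  then show ?thesis by (rule PR_cong) (simp add: nrec_add nrec_mult nrec_pred nrec_sub nrec_pow nrec_sub1 nrec_pow1 nrec_if nrec_sum)
qed

lemma PR_min: assumes "PR n F" "PR n G" shows "PR n (\<lambda>g xs. min (F g xs) (G g xs))"
proof -
  have "PR n (\<lambda>g xs. F g xs - (F g xs - G g xs))" by (intro PR_sub assms)
  then show ?thesis by (rule PR_cong) simp
qed

lemma PR_mod2: assumes "PR n F" shows "PR n (\<lambda>g xs. F g xs mod 2)"
proof -
  have h: "PR n (\<lambda>g xs. nrec 0 (\<lambda>m r. (\<lambda>g ys. 1 - ys ! 1) g (m # r # xs)) (F g xs))"
    by (rule PR_rec[OF PR_const _ assms(1)]) (intro PR_sub PR_const PR_p1)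
  have e: "nrec 0 (\<lambda>m. (-) (Suc 0)) x = x mod 2" for x
    by (induction x) (auto simp: mod_Suc)
  show ?thesis by (rule PR_cong[OF h]) (simp add: e)
qed

lemma sum_mod2: "(\<Sum>j<x. j mod 2) = x div 2" for x :: nat
proof (induction x)
  case (Suc x) then show ?case by (cases "even x"; simp add: odd_iff_mod_2_eq_one)
qed simp

lemma PR_div2: assumes "PR n F" shows "PR n (\<lambda>g xs. F g xs div 2)"
proof -
  have "PR n (\<lambda>g xs. \<Sum>j<F g xs. (\<lambda>g ys. ys ! 0 mod 2) g (j # xs))"
    by (rule PR_sum[OF _ assms]) (intro PR_mod2 PR_proj, simp)
  then show ?thesis by (rule PR_cong) (simp add: sum_mod2)
qed


definition tlc :: "nat \<Rightarrow> nat" where "tlc x = (x - 1) div 2"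
definition remc :: "nat \<Rightarrow> nat \<Rightarrow> nat" where "remc k j = (tlc ^^ j) k"
definition Lc :: "nat \<Rightarrow> nat" where "Lc k = (\<Sum>j<k. if remc k j = 0 then 0 else 1)"
definition Cc :: "nat \<Rightarrow> nat" where
  "Cc k = 3 + (\<Sum>j<k. if remc k j = 0 then 0 else (if remc k j mod 2 = 0 then 4 else 2) * 3 ^ (Lc k - j))"
definition alpha :: "(nat \<Rightarrow> nat) \<Rightarrow> nat \<Rightarrow> nat" where
  "alpha g k = (if g k = 0 then Cc k - 1 else Cc k + 1)"
definition beta :: "(nat \<Rightarrow> nat) \<Rightarrow> nat \<Rightarrow> nat" where
  "beta g k = (if g k = 0 then Cc k + 4 else Cc k + 2)"
definition tm :: "(nat \<Rightarrow> nat) \<Rightarrow> nat \<Rightarrow> nat \<Rightarrow> nat \<Rightarrow> nat" where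
  "tm g k p r = min (p * 3 ^ (Lc k + 2) - alpha g k * r) (beta g k * r - p * 3 ^ (Lc k + 2))"
definition numO :: "nat \<Rightarrow> nat \<Rightarrow> nat" where
  "numO p r = min (3 * p) (r - 3 * p) + min (3 * p - 2 * r) (3 * r - 3 * p)"
definition Num :: "(nat \<Rightarrow> nat) \<Rightarrow> nat \<Rightarrow> nat \<Rightarrow> nat \<Rightarrow> nat" where
  "Num g n p r = p * 6 ^ (n + 2) + numO p r * (3 * 6 ^ n) + (\<Sum>k<n. tm g k p r * 3 ^ (n - Lc k) * 2 ^ (n - k))"
definition Den :: "nat \<Rightarrow> nat \<Rightarrow> nat" where "Den n r = r * 6 ^ (n + 2)"
definition sqd :: "nat \<Rightarrow> nat" where "sqd i = (\<Sum>t<i+1. if triangle (t + 1) - i = 0 then 1 else 0)"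
definition pd1 :: "nat \<Rightarrow> nat" where "pd1 i = i - triangle (sqd i)"
definition pd2 :: "nat \<Rightarrow> nat" where "pd2 i = sqd i - pd1 i"
definition Aout :: "(nat \<Rightarrow> nat) \<Rightarrow> nat \<Rightarrow> nat \<Rightarrow> nat" where
  "Aout g i n = prod_encode (2 * Num g n (pd1 i div 2) (pd2 i + 1), Den n (pd2 i + 1) - 1)"

lemmas PRI = PR_add PR_mult PR_sub PR_pow PR_min PR_div2 PR_mod2 PR_const PR_oracle PR_if

lemma PR_drop1: "PR n K \<Longrightarrow> PR (Suc n) (\<lambda>g ys. K g (drop 1 ys))"
  using PR_drop[of n K 1] by simp

lemma PR_y0: "PR (Suc n) (\<lambda>g ys. ys ! 0)" by (rule PR_proj) simp

lemma PR_tri: assumes "PR n F" shows "PR n (\<lambda>g xs. triangle (F g xs))"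
proof -
  have h: "PR n (\<lambda>g xs. \<Sum>j<F g xs. (\<lambda>g ys. Suc (ys ! 0)) g (j # xs))"
    by (rule PR_sum[OF _ assms]) (intro PR_succ PR_y0)
  have e: "(\<Sum>j<x. Suc j) = triangle x" for x by (induction x) simp_all
  show ?thesis by (rule PR_cong[OF h]) (simp add: e)
qed

lemma PR_penc: assumes "PR n F" "PR n G" shows "PR n (\<lambda>g xs. prod_encode (F g xs, G g xs))"
proof -
  have "PR n (\<lambda>g xs. triangle (F g xs + G g xs) + F g xs)"
    by (intro PR_add PR_tri assms)
  then show ?thesis by (rule PR_cong) (simp add: prod_encode_def)
qed

lemma PR_sqd: assumes "PR n F" shows "PR n (\<lambda>g xs. sqd (F g xs))"
proof -
  have "PR n (\<lambda>g xs. \<Sum>j<F g xs + 1. (\<lambda>g ys. if triangle (ys ! 0 + 1) - F g (drop 1 ys) = 0 then 1 else 0) g (j # xs))"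
    by (rule PR_sum) (intro PRI PR_tri PR_y0 PR_drop1 assms)+
  then show ?thesis by (rule PR_cong) (simp add: sqd_def)
qed

lemma PR_pd1: assumes "PR n F" shows "PR n (\<lambda>g xs. pd1 (F g xs))"
  unfolding pd1_def by (intro PRI PR_tri PR_sqd assms)

lemma PR_pd2: assumes "PR n F" shows "PR n (\<lambda>g xs. pd2 (F g xs))"
  unfolding pd2_def by (intro PRI PR_pd1 PR_sqd assms)

lemma PR_remc: assumes "PR n K" "PR n J" shows "PR n (\<lambda>g xs. remc (K g xs) (J g xs))"
proof -
  have h: "PR n (\<lambda>g xs. nrec (K g xs) (\<lambda>m r. (\<lambda>g ys. (ys ! 1 - 1) div 2) g (m # r # xs)) (J g xs))"
    by (rule PR_rec[OF assms(1) _ assms(2)]) (intro PRI PR_p1)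
  have e: "nrec k (\<lambda>m r. (r - Suc 0) div 2) j = remc k j" for k j
    by (induction j) (simp_all add: remc_def tlc_def)
  show ?thesis by (rule PR_cong[OF h]) (simp add: e)
qed

lemma PR_Lc: assumes "PR n K" shows "PR n (\<lambda>g xs. Lc (K g xs))"
proof -
  have "PR n (\<lambda>g xs. \<Sum>j<K g xs. (\<lambda>g ys. if remc (K g (drop 1 ys)) (ys ! 0) = 0 then 0 else 1) g (j # xs))"
    by (rule PR_sum) (intro PRI PR_remc PR_y0 PR_drop1 assms)+
  then show ?thesis by (rule PR_cong) (simp add: Lc_def)
qed

lemma PR_Cc: assumes "PR n K" shows "PR n (\<lambda>g xs. Cc (K g xs))"
proof -
  have "PR n (\<lambda>g xs. 3 + (\<Sum>j<K g xs. (\<lambda>g ys. if remc (K g (drop 1 ys)) (ys ! 0) = 0 then 0 else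
     (if remc (K g (drop 1 ys)) (ys ! 0) mod 2 = 0 then 4 else 2) * 3 ^ (Lc (K g (drop 1 ys)) - ys ! 0)) g (j # xs)))"
    by (intro PR_add PR_const, rule PR_sum) (intro PRI PR_remc PR_Lc PR_y0 PR_drop1 assms)+
  then show ?thesis by (rule PR_cong) (simp add: Cc_def cong: if_cong)
qed

lemma PR_tm: assumes "PR n K" "PR n P" "PR n R" shows "PR n (\<lambda>g xs. tm g (K g xs) (P g xs) (R g xs))"
  unfolding tm_def alpha_def beta_def by (intro PRI PR_Cc PR_Lc assms)+

lemma PR_Num: assumes "PR n N" "PR n P" "PR n R" shows "PR n (\<lambda>g xs. Num g (N g xs) (P g xs) (R g xs))"
proof -
  have "PR n (\<lambda>g xs. P g xs * 6 ^ (N g xs + 2) + numO (P g xs) (R g xs) * (3 * 6 ^ N g xs) +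
     (\<Sum>j<N g xs. (\<lambda>g ys. tm g (ys ! 0) (P g (drop 1 ys)) (R g (drop 1 ys)) * 3 ^ (N g (drop 1 ys) - Lc (ys ! 0)) * 2 ^ (N g (drop 1 ys) - ys ! 0)) g (j # xs)))"
    unfolding numO_def
    by (intro PR_add PR_mult PR_pow PR_min PR_sub PR_const assms, rule PR_sum) (intro PRI PR_tm PR_Lc PR_y0 PR_drop1 assms)+
  then show ?thesis by (rule PR_cong) (simp add: Num_def)
qed

lemma PR_Aout: "PR 2 (\<lambda>g xs. Aout g (xs ! 0) (xs ! 1))"
  unfolding Aout_def Den_def
  by (intro PR_penc PRI PR_Num PR_pd1 PR_pd2 PR_proj) simp_all


lemma str_code_mod2: "str_code (b # bs) mod 2 = (if b then 0 else 1)"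
  by simp

lemma str_code_eq0: "str_code s = 0 \<longleftrightarrow> s = []"
  by (cases s) auto

lemma str_code_inj: "str_code s = str_code t \<Longrightarrow> s = t"
proof (induction s arbitrary: t)
  case Nil then show ?case by (simp add: str_code_eq0)
next
  case (Cons a s)
  have "t \<noteq> []" using Cons.prems str_code_eq0[of "a # s"] by force
  then obtain b t' where t: "t = b # t'" by (cases t) auto
  have "str_code (a # s) mod 2 = str_code (b # t') mod 2" using Cons.prems t by simp
  then have "a = b" unfolding str_code_mod2 by (cases a; cases b) simp_all
  with Cons.prems t have "str_code s = str_code t'" by auto
  with Cons.IH t \<open>a = b\<close> show ?case by simp
qed

lemma str_code_surj: "\<exists>s. str_code s = k"
proof (induction k rule: less_induct)
  case (less k)
  show ?case
  proof (cases k)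
    case 0 then show ?thesis by (intro exI[of _ "[]"]) simp
  next
    case (Suc m)
    have "m div 2 < k" using Suc by simp
    then obtain s where s: "str_code s = m div 2" using less by blast
    have "2 * (m div 2) + (if odd m then 2 else 1) = Suc m" by presburger
    then show ?thesis
      by (intro exI[of _ "odd m # s"]) (simp add: s Suc)
  qed
qed

lemma length_le_code: "length s \<le> str_code s"
  by (induction s) auto

lemma tlc_code: "tlc (str_code s) = str_code (tl s)"
  by (cases s) (auto simp: tlc_def)

lemma remc_code: "remc (str_code s) j = str_code (drop j s)"
proof (induction j arbitrary: s)
  case 0 then show ?case by (simp add: remc_def)
next
  case (Suc j)
  have "remc (str_code s) (Suc j) = tlc (remc (str_code s) j)" by (simp add: remc_def)
  also have "\<dots> = str_code (drop (Suc j) s)" using Suc by (simp add: tlc_code drop_Suc tl_drop)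
  finally show ?case .
qed

lemma sum_if_less: "(\<Sum>j<k. if j < L then f j else 0) = (\<Sum>j<min k L. f j)" for k L :: nat
  by (induction k) (auto simp: min_def)

lemma Lc_code: "Lc (str_code s) = length s"
proof -
  have "Lc (str_code s) = (\<Sum>j<str_code s. if j < length s then 1 else 0)"
    unfolding Lc_def by (rule sum.cong) (auto simp: remc_code str_code_eq0)
  also have "\<dots> = length s" using length_le_code[of s] by (simp add: sum_if_less min_def)
  finally show ?thesis .
qed

definition Cs :: "bool list \<Rightarrow> nat" where
  "Cs s = 3 + (\<Sum>j<length s. (if s ! j then 4 else 2) * 3 ^ (length s - j))"

lemma Cc_code: "Cc (str_code s) = Cs s"
proof -
  have "Cc (str_code s) = 3 + (\<Sum>j<str_code s. if j < length s then (if s ! j then 4 else 2) * 3 ^ (length s - j) else 0)"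
    unfolding Cc_def
  proof (intro arg_cong[where f="\<lambda>x. 3 + x"] sum.cong refl)
    fix j assume "j \<in> {..<str_code s}"
    show "(if remc (str_code s) j = 0 then 0 else (if remc (str_code s) j mod 2 = 0 then 4 else 2) * 3 ^ (Lc (str_code s) - j)) =
      (if j < length s then (if s ! j then 4 else 2) * 3 ^ (length s - j) else (0::nat))"
    proof (cases "j < length s")
      case True
      then have "drop j s = s ! j # drop (Suc j) s" by (simp add: Cons_nth_drop_Suc)
      then show ?thesis using True by (simp add: remc_code Lc_code str_code_eq0 del: str_code.simps) (simp add: str_code_mod2 str_code_eq0 del: str_code.simps)
    qed (simp add: remc_code str_code_eq0)
  qed
  also have "\<dots> = Cs s" using length_le_code[of s] by (simp add: sum_if_less min_def Cs_def)
  finally show ?thesis .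
qed

lemma Cs_ge: "Cs s \<ge> 3" by (simp add: Cs_def)

lemma Cs_Cons: "Cs (b # s) = Cs s + (if b then 4 else 2) * 3 ^ (length s + 1)"
  unfolding Cs_def length_Cons
  apply (subst sum.lessThan_Suc_shift)
  apply (simp del: sum.lessThan_Suc)
  done

lemma chi_code: "chi T (str_code s) = (if s \<in> T then 1 else 0)"
  unfolding chi_def using str_code_inj by auto

definition cr :: "bool list \<Rightarrow> real" where "cr s = real (Cs s) / 3 ^ (length s + 2)"
definition uu :: "bool list \<Rightarrow> real" where "uu s = 1 / 3 ^ (length s + 2)"

lemma cr_Nil: "cr [] = 1/3" by (simp add: cr_def Cs_def)

lemma cr_Cons: "cr (b # s) = 1/3 + (if b then 2/9 else 0) + (cr s - 1/3) / 3"
  by (simp add: cr_def Cs_Cons field_simps)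

lemma uu_Cons: "uu (b # s) = uu s / 3" by (simp add: uu_def)
lemma uu_pos: "uu s > 0" by (simp add: uu_def)
lemma uu_le: "uu s \<le> 1/9" by (simp add: uu_def)

lemma cr_snoc: "cr (s @ [b]) = cr s + (if b then 2 * uu s else 0)"
  by (induction s) (auto simp: cr_Cons cr_Nil uu_Cons uu_def)

lemma cr_bounds: "1/3 \<le> cr s \<and> cr s + 3 * uu s \<le> 2/3"
proof (induction s)
  case Nil then show ?case by (simp add: cr_Nil uu_def)
next
  case (Cons b s)
  then have h: "1/3 \<le> cr s" "cr s + 3 * uu s \<le> 2/3" by auto
  show ?case unfolding cr_Cons uu_Cons using h by (cases b) (auto simp: field_simps)
qed


definition cdg :: "(nat \<Rightarrow> bool) \<Rightarrow> nat \<Rightarrow> real" where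
  "cdg X n = (if X n then 2 else 0) / 3 ^ (n + 2)"

lemma cdg_nonneg: "0 \<le> cdg X n" by (simp add: cdg_def)
lemma cdg_le: "cdg X n \<le> 2/9 * (1/3) ^ n"
  by (simp add: cdg_def power_add field_simps)

lemma geo_sums: "(\<lambda>n. 2/9 * (1/3::real) ^ n) sums (1/3)"
proof -
  have "(\<lambda>n. (1/3::real) ^ n) sums (1 / (1 - 1/3))" by (rule geometric_sums) simp
  from sums_mult[OF this, of "2/9"] show ?thesis by simp
qed

lemma cdg_summable: "summable (cdg X)"
  by (rule summable_comparison_test'[OF sums_summable[OF geo_sums], of 0]) (subst real_norm_def, subst abs_of_nonneg[OF cdg_nonneg], rule cdg_le)

lemma cdg_sum_bounds: "0 \<le> suminf (cdg X) \<and> suminf (cdg X) \<le> 1/3"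
proof
  show "0 \<le> suminf (cdg X)" by (rule suminf_nonneg[OF cdg_summable cdg_nonneg])
  have "suminf (cdg X) \<le> (\<Sum>n. 2/9 * (1/3::real) ^ n)"
    by (rule suminf_le[OF cdg_le cdg_summable sums_summable[OF geo_sums]])
  then show "suminf (cdg X) \<le> 1/3" using sums_unique[OF geo_sums] by simp
qed

lemma cantor_cd: "cantor X = 1/3 + suminf (cdg X)"
  unfolding cantor_def cdg_def[abs_def] by simp

lemma cantor_bounds: "1/3 \<le> cantor X \<and> cantor X \<le> 2/3"
  using cdg_sum_bounds[of X] by (simp add: cantor_cd)

lemma cantor_rec: "cantor X = 1/3 + (if X 0 then 2/9 else 0) + (cantor (\<lambda>n. X (Suc n)) - 1/3) / 3"
proof -
  have e: "cdg X (Suc n) = 1/3 * cdg (\<lambda>n. X (Suc n)) n" for n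
    by (simp add: cdg_def field_simps)
  have "suminf (cdg X) = cdg X 0 + (\<Sum>n. cdg X (Suc n))"
    using suminf_split_head[OF cdg_summable[of X]] by simp
  also have "(\<Sum>n. cdg X (Suc n)) = 1/3 * suminf (cdg (\<lambda>n. X (Suc n)))"
    unfolding e by (rule suminf_mult[OF cdg_summable])
  finally have "suminf (cdg X) = cdg X 0 + 1/3 * suminf (cdg (\<lambda>n. X (Suc n)))" .
  moreover have "cdg X 0 = (if X 0 then 2/9 else 0)" by (simp add: cdg_def)
  ultimately show ?thesis unfolding cantor_cd by simp
qed

lemma prefix_lemma:
  "(map X [0..<length s] = s \<longrightarrow> cr s \<le> cantor X \<and> cantor X \<le> cr s + 3 * uu s) \<and>
   (map X [0..<length s] \<noteq> s \<longrightarrow> cantor X \<le> cr s - 3 * uu s \<or> cr s + 6 * uu s \<le> cantor X)"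
proof (induction s arbitrary: X)
  case Nil
  then show ?case using cantor_bounds[of X] by (simp add: cr_Nil uu_def)
next
  case (Cons b s)
  define Y where "Y = (\<lambda>n. X (Suc n))"
  have m: "map X [0..<length (b # s)] = X 0 # map Y [0..<length s]"
    by (simp add: Y_def map_upt_Suc del: upt_Suc)
  have cx: "cantor X = 1/3 + (if X 0 then 2/9 else 0) + (cantor Y - 1/3) / 3"
    using cantor_rec[of X] by (simp add: Y_def)
  have IH: "(map Y [0..<length s] = s \<longrightarrow> cr s \<le> cantor Y \<and> cantor Y \<le> cr s + 3 * uu s) \<and>
   (map Y [0..<length s] \<noteq> s \<longrightarrow> cantor Y \<le> cr s - 3 * uu s \<or> cr s + 6 * uu s \<le> cantor Y)"
    by (rule Cons.IH)
  have B: "1/3 \<le> cr s" "cr s + 3 * uu s \<le> 2/3" using cr_bounds[of s] by auto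
  have C: "1/3 \<le> cantor Y" "cantor Y \<le> 2/3" using cantor_bounds[of Y] by auto
  have U: "0 < uu s" "uu s \<le> 1/9" by (rule uu_pos, rule uu_le)
  show ?case
  proof (cases "X 0 = b")
    case True
    have D: "cantor X - cr (b # s) = (cantor Y - cr s) / 3" using cx True cr_Cons[of b s] by (simp add: field_simps)
    have U3: "uu (b # s) = uu s / 3" by (rule uu_Cons)
    have E: "(map X [0..<length (b # s)] = b # s) = (map Y [0..<length s] = s)" unfolding m using True by simp
    show ?thesis unfolding E using IH D U3 by (cases "map Y [0..<length s] = s") auto
  next
    case False
    then have "map X [0..<length (b # s)] \<noteq> b # s" unfolding m by simp
    moreover have "cantor X \<le> cr (b # s) - 3 * uu (b # s) \<or> cr (b # s) + 6 * uu (b # s) \<le> cantor X"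
    proof (cases b)
      case True
      with False have "cantor X = 1/3 + (cantor Y - 1/3) / 3" using cx by simp
      moreover have "cr (b # s) = 1/3 + 2/9 + (cr s - 1/3) / 3" using True by (simp add: cr_Cons)
      ultimately have "cantor X \<le> cr (b # s) - 3 * uu (b # s)" using B C U uu_le[of s] uu_Cons[of b s] by argo
      then show ?thesis ..
    next
      case F: False
      with False have "cantor X = 1/3 + 2/9 + (cantor Y - 1/3) / 3" using cx by simp
      moreover have "cr (b # s) = 1/3 + (cr s - 1/3) / 3" using F by (simp add: cr_Cons)
      ultimately have "cr (b # s) + 6 * uu (b # s) \<le> cantor X" using B C U uu_le[of s] uu_Cons[of b s] by argo
      then show ?thesis ..
    qed
    ultimately show ?thesis by blast
  qed
qed

lemma gap_lemma: "\<not> (cr s + uu s < cantor X \<and> cantor X < cr s + 2 * uu s)"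
proof (cases "map X [0..<length s] = s")
  case True
  have "map X [0..<length (s @ [X (length s)])] = s @ [X (length s)]"
    using True by simp
  then have h: "cr (s @ [X (length s)]) \<le> cantor X \<and> cantor X \<le> cr (s @ [X (length s)]) + 3 * uu (s @ [X (length s)])"
    using prefix_lemma[of X "s @ [X (length s)]"] by blast
  have "uu (s @ [X (length s)]) = uu s / 3" by (simp add: uu_def)
  then show ?thesis using h unfolding cr_snoc by (cases "X (length s)") auto
next
  case False
  then show ?thesis using prefix_lemma[of X s] uu_pos[of s] by auto
qed

primrec sqs :: "real \<Rightarrow> nat \<Rightarrow> bool list" where
  "sqs x 0 = []"
| "sqs x (Suc n) = sqs x n @ [cr (sqs x n) + 2 * uu (sqs x n) \<le> x]"

lemma length_sqs: "length (sqs x n) = n" by (induction n) auto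

lemma construct:
  assumes x: "1/3 \<le> x" "x \<le> 2/3"
    and gap: "\<And>s. \<not> (cr s + uu s < x \<and> x < cr s + 2 * uu s)"
  shows "\<exists>X. cantor X = x"
proof -
  have inv: "cr (sqs x n) \<le> x \<and> x \<le> cr (sqs x n) + 3 * uu (sqs x n)" for n
  proof (induction n)
    case 0 then show ?case using x by (simp add: cr_Nil uu_def)
  next
    case (Suc n)
    let ?s = "sqs x n"
    have u: "uu (?s @ [True]) = uu ?s / 3" "uu (?s @ [False]) = uu ?s / 3" by (simp_all add: uu_def)
    show ?case using Suc gap[of ?s] by (auto simp: cr_snoc u)
  qed
  define X where "X = (\<lambda>n. sqs x (Suc n) ! n)"
  have mX: "map X [0..<n] = sqs x n" for n
  proof (induction n)
    case (Suc n)
    have "X n = (cr (sqs x n) + 2 * uu (sqs x n) \<le> x)"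
      by (simp add: X_def nth_append length_sqs)
    then show ?case using Suc by simp
  qed simp
  have close: "\<bar>cantor X - x\<bar> \<le> 3 * uu (sqs x n)" for n
    using prefix_lemma[of X "sqs x n"] inv[of n] mX[of n] by (auto simp: length_sqs)
  show ?thesis
  proof (rule exI, rule ccontr)
    assume "cantor X \<noteq> x"
    then have "\<bar>cantor X - x\<bar> > 0" by simp
    from real_arch_pow_inv[OF this, of "1/3"] obtain n where n: "(1/3::real) ^ n < \<bar>cantor X - x\<bar>" by auto
    have "3 * uu (sqs x n) \<le> (1/3) ^ n" by (simp add: uu_def length_sqs power_add field_simps)
    with close[of n] n show False by linarith
  qed
qed


definition tent :: "real \<Rightarrow> real \<Rightarrow> real \<Rightarrow> real" where
  "tent a b x = max 0 (min (x - a) (b - x))"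
definition lo :: "bool list set \<Rightarrow> nat \<Rightarrow> real" where
  "lo T k = real (alpha (chi T) k) / 3 ^ (Lc k + 2)"
definition hi :: "bool list set \<Rightarrow> nat \<Rightarrow> real" where
  "hi T k = real (beta (chi T) k) / 3 ^ (Lc k + 2)"
definition w :: "nat \<Rightarrow> real" where "w k = (1/2) ^ (k + 2)"
definition tk :: "bool list set \<Rightarrow> real \<Rightarrow> nat \<Rightarrow> real" where
  "tk T x k = w k * tent (lo T k) (hi T k) x"
definition Ofn :: "real \<Rightarrow> real" where
  "Ofn x = (tent 0 (1/3) x + tent (2/3) 1 x) / 4"
definition GG :: "bool list set \<Rightarrow> real \<Rightarrow> real" where
  "GG T x = Ofn x + suminf (tk T x)"
definition ff :: "bool list set \<Rightarrow> real \<Rightarrow> real" where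
  "ff T x = x + GG T x"

lemma tent_nonneg: "0 \<le> tent a b x" by (simp add: tent_def)
lemma tent_le: "tent a b x \<le> max 0 ((b - a) / 2)" unfolding tent_def by (auto simp: min_def max_def field_simps)
lemma tent_lip: "\<bar>tent a b x - tent a b y\<bar> \<le> \<bar>x - y\<bar>" unfolding tent_def by (auto simp: min_def max_def abs_if)
lemma tent_pos: "0 < tent a b x \<longleftrightarrow> a < x \<and> x < b" unfolding tent_def by (auto simp: min_def max_def)
lemma tent_le1: "b \<le> 1 \<Longrightarrow> x \<le> 1 \<Longrightarrow> tent a b x \<le> 1 - x" by (simp add: tent_def)
lemma tent_zero: "tent a b x = 0 \<longleftrightarrow> \<not> (a < x \<and> x < b)"
  using tent_pos[of a b x] tent_nonneg[of a b x] by linarith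

lemma w_pos: "0 < w k" by (simp add: w_def)
lemma w_sums: "w sums (1/2)"
proof -
  have "(\<lambda>n. (1/2::real) ^ n) sums (1 / (1 - 1/2))" by (rule geometric_sums) simp
  from sums_mult[OF this, of "1/4"] have "(\<lambda>n. 1/4 * (1/2::real) ^ n) sums (1/2)" by simp
  moreover have "(\<lambda>n. 1/4 * (1/2::real) ^ n) = w" by (rule ext) (simp add: w_def power_add)
  ultimately show ?thesis by simp
qed
lemma w_summable: "summable w" using w_sums by (rule sums_summable)
lemma w_suminf: "suminf w = 1/2" using w_sums by (simp add: sums_iff)

lemma lohi_code:
  "lo T (str_code s) = (if s \<in> T then cr s + uu s else cr s - uu s) \<and>
   hi T (str_code s) = (if s \<in> T then cr s + 2 * uu s else cr s + 4 * uu s)"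
proof -
  have c3: "Cs s \<ge> 3" by (rule Cs_ge)
  then have r: "real (Cs s - 1) = real (Cs s) - 1" by simp
  show ?thesis
    unfolding lo_def hi_def alpha_def beta_def chi_code Lc_code Cc_code cr_def uu_def
    using c3 by (auto simp: r add_divide_distrib diff_divide_distrib)
qed

lemma lohi_bounds: "0 \<le> lo T k \<and> lo T k < hi T k \<and> hi T k \<le> 1"
proof -
  obtain s where s: "str_code s = k" using str_code_surj by blast
  have A: "1/3 \<le> cr s" "cr s + 3 * uu s \<le> 2/3" using cr_bounds[of s] by auto
  have U: "0 < uu s" "uu s \<le> 1/9" using uu_pos[of s] uu_le[of s] by auto
  show ?thesis
  proof (cases "s \<in> T")
    case True
    then have "lo T k = cr s + uu s" "hi T k = cr s + 2 * uu s" using lohi_code[of T s] s by auto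
    with A U show ?thesis by argo
  next
    case False
    then have "lo T k = cr s - uu s" "hi T k = cr s + 4 * uu s" using lohi_code[of T s] s by auto
    with A U show ?thesis by argo
  qed
qed

lemma tk_nonneg: "0 \<le> tk T x k" by (simp add: tk_def w_def tent_nonneg)
lemma tk_le: "tk T x k \<le> w k"
proof -
  have "tent (lo T k) (hi T k) x \<le> 1"
    using tent_le[of "lo T k" "hi T k" x] lohi_bounds[of T k] by (simp add: max_def split: if_splits)
  then show ?thesis unfolding tk_def using w_pos[of k] by (simp add: mult_left_le)
qed
lemma tk_summable: "summable (tk T x)"
  by (rule summable_comparison_test'[OF w_summable, of 0]) (simp add: tk_nonneg tk_le)

lemma tk_lip: "\<bar>tk T x k - tk T y k\<bar> \<le> w k * \<bar>x - y\<bar>"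
proof -
  have "\<bar>tk T x k - tk T y k\<bar> = w k * \<bar>tent (lo T k) (hi T k) x - tent (lo T k) (hi T k) y\<bar>"
    unfolding tk_def using w_pos[of k] by (simp add: right_diff_distrib[symmetric] abs_mult)
  also have "\<dots> \<le> w k * \<bar>x - y\<bar>" using w_pos[of k] tent_lip by (simp add: mult_left_mono)
  finally show ?thesis .
qed

lemma S_lip: "\<bar>suminf (tk T x) - suminf (tk T y)\<bar> \<le> \<bar>x - y\<bar> / 2"
proof -
  have e: "suminf (tk T x) - suminf (tk T y) = (\<Sum>k. tk T x k - tk T y k)"
    by (rule suminf_diff[OF tk_summable tk_summable])
  have sm: "summable (\<lambda>k. w k * \<bar>x - y\<bar>)" by (rule summable_mult2[OF w_summable])
  have sa: "summable (\<lambda>k. \<bar>tk T x k - tk T y k\<bar>)"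
    by (rule summable_rabs_comparison_test[OF _ sm]) (use tk_lip in auto)
  have "\<bar>\<Sum>k. tk T x k - tk T y k\<bar> \<le> (\<Sum>k. \<bar>tk T x k - tk T y k\<bar>)" by (rule summable_rabs[OF sa])
  also have "\<dots> \<le> (\<Sum>k. w k * \<bar>x - y\<bar>)" by (rule suminf_le[OF tk_lip sa sm])
  also have "\<dots> = \<bar>x - y\<bar> / 2" by (simp add: suminf_mult2[OF w_summable, symmetric] w_suminf)
  finally show ?thesis unfolding e .
qed

lemma GG_lip: "\<bar>GG T x - GG T y\<bar> \<le> \<bar>x - y\<bar>"
proof -
  have "\<bar>Ofn x - Ofn y\<bar> \<le> \<bar>x - y\<bar> / 2"
    using tent_lip[of 0 "1/3" x y] tent_lip[of "2/3" 1 x y] unfolding Ofn_def by argo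
  then show ?thesis using S_lip[of T x y] unfolding GG_def by argo
qed

lemma GG_nonneg: "0 \<le> GG T x"
  unfolding GG_def Ofn_def using suminf_nonneg[OF tk_summable tk_nonneg, of T x] tent_nonneg[of 0 "1/3" x] tent_nonneg[of "2/3" 1 x]
  by simp

lemma GG_le: assumes "x \<le> 1" shows "GG T x \<le> 1 - x"
proof -
  have "tk T x k \<le> w k * (1 - x)" for k
    unfolding tk_def using tent_le1[OF _ assms, of "hi T k" "lo T k"] lohi_bounds[of T k] w_pos[of k]
    by (simp add: mult_left_mono)
  then have "suminf (tk T x) \<le> (\<Sum>k. w k * (1 - x))"
    by (rule suminf_le[OF _ tk_summable summable_mult2[OF w_summable]])
  also have "\<dots> = (1 - x) / 2" by (simp add: suminf_mult2[OF w_summable, symmetric] w_suminf)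
  finally have "suminf (tk T x) \<le> (1 - x) / 2" .
  moreover have "Ofn x \<le> (1 - x) / 2"
    using tent_le1[of "1/3" x 0] tent_le1[of 1 x "2/3"] assms unfolding Ofn_def by simp
  ultimately show ?thesis unfolding GG_def by simp
qed

lemma ff_lip: "\<bar>ff T x - ff T y\<bar> \<le> 2 * \<bar>x - y\<bar>"
proof -
  have "ff T x - ff T y = (x - y) + (GG T x - GG T y)" by (simp add: ff_def)
  then have "\<bar>ff T x - ff T y\<bar> \<le> \<bar>x - y\<bar> + \<bar>GG T x - GG T y\<bar>" using abs_triangle_ineq by simp
  then show ?thesis using GG_lip[of T x y] by smt
qed

lemma ff_mono: assumes "x \<le> y" shows "ff T x \<le> ff T y"
proof -
  have "\<bar>GG T x - GG T y\<bar> \<le> y - x" using GG_lip[of T x y] assms by simp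
  then have "GG T x - GG T y \<le> y - x" by (simp add: abs_le_iff)
  then show ?thesis by (simp add: ff_def)
qed

lemma aux4: "0 \<le> (a::real) \<Longrightarrow> 0 \<le> b \<Longrightarrow> 0 \<le> s \<Longrightarrow> ((a + b) / 4 + s = 0) = (a = 0 \<and> b = 0 \<and> s = 0)"
  by (auto simp: field_simps)

lemma GG_zero: "GG T x = 0 \<longleftrightarrow> tent 0 (1/3) x = 0 \<and> tent (2/3) 1 x = 0 \<and> (\<forall>k. tent (lo T k) (hi T k) x = 0)"
proof -
  have s0: "suminf (tk T x) = 0 \<longleftrightarrow> (\<forall>k. tk T x k = 0)"
    by (rule suminf_eq_zero_iff[OF tk_summable tk_nonneg])
  have tk0: "tk T x k = 0 \<longleftrightarrow> tent (lo T k) (hi T k) x = 0" for k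
    unfolding tk_def using w_pos[of k] by simp
  have n: "0 \<le> suminf (tk T x)" by (rule suminf_nonneg[OF tk_summable tk_nonneg])
  have a: "0 \<le> tent 0 (1/3) x" "0 \<le> tent (2/3) 1 x" by (rule tent_nonneg)+
  have "GG T x = 0 \<longleftrightarrow> tent 0 (1/3) x = 0 \<and> tent (2/3) 1 x = 0 \<and> suminf (tk T x) = 0"
    unfolding GG_def Ofn_def using aux4[OF a n] .
  then show ?thesis unfolding s0 tk0 .
qed


lemma tent_scale1: assumes d: "d > 0" shows "tent (a / d) (b / d) (x / d) = tent a b x / d"
proof -
  have "min ((x - a) / d) ((b - x) / d) = min (x - a) (b - x) / d"
    using d by (auto simp: min_def divide_le_cancel)
  moreover have "max 0 (z / d) = max 0 z / d" for z
    using d by (auto simp: max_def divide_le_0_iff zero_le_divide_iff)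
  ultimately show ?thesis unfolding tent_def by (simp add: diff_divide_distrib)
qed

lemma tent_nat: "tent (real a) (real b) (real P) = real (min (P - a) (b - P))"
proof (cases "a \<le> P \<and> P \<le> b")
  case True
  then have "real (P - a) = real P - real a" "real (b - P) = real b - real P" by (simp_all add: of_nat_diff)
  then show ?thesis unfolding tent_def min_def by auto
next
  case False
  then have "min (P - a) (b - P) = 0" by auto
  moreover have "min (real P - real a) (real b - real P) \<le> 0" using False by auto
  ultimately show ?thesis unfolding tent_def by simp
qed

lemma tent_scale: assumes "d > 0"
  shows "tent (real a / d) (real b / d) (real P / d) = real (min (P - a) (b - P)) / d"
  using tent_scale1[OF assms] tent_nat by simp

lemma Lc_le: "Lc k \<le> k"
proof -
  have "Lc k \<le> (\<Sum>j<k. (1::nat))" unfolding Lc_def by (rule sum_mono) simp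
  then show ?thesis by simp
qed

lemma Ofn_eq: assumes r: "r > 0"
  shows "Ofn (real p / real r) = real (numO p r) / (12 * real r)"
proof -
  have d: "(3 * real r) > 0" using r by simp
  have q: "real p / real r = real (3 * p) / (3 * real r)" using r by simp
  have e1: "tent 0 (1/3) (real p / real r) = real (min (3 * p - 0) (r - 3 * p)) / (3 * real r)"
    using tent_scale[OF d, of 0 r "3 * p"] r unfolding q by simp
  have e2: "tent (2/3) 1 (real p / real r) = real (min (3 * p - 2 * r) (3 * r - 3 * p)) / (3 * real r)"
    using tent_scale[OF d, of "2 * r" "3 * r" "3 * p"] r unfolding q by simp
  have rr: "real r \<noteq> 0" using r by simp
  show ?thesis unfolding Ofn_def e1 e2 numO_def using rr by (simp add: field_simps)
qed

lemma tk_eq: assumes r: "r > 0" and kn: "k < n"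
  shows "tk T (real p / real r) k = real (tm (chi T) k p r * 3 ^ (n - Lc k) * 2 ^ (n - k)) / (real r * 6 ^ (n + 2))"
proof -
  let ?L = "Lc k"
  have d: "real r * 3 ^ (?L + 2) > 0" using r by simp
  have q: "real p / real r = real (p * 3 ^ (?L + 2)) / (real r * 3 ^ (?L + 2))" using r by simp
  have l: "lo T k = real (alpha (chi T) k * r) / (real r * 3 ^ (?L + 2))" using r by (simp add: lo_def)
  have h: "hi T k = real (beta (chi T) k * r) / (real r * 3 ^ (?L + 2))" using r by (simp add: hi_def)
  have t: "tent (lo T k) (hi T k) (real p / real r) = real (tm (chi T) k p r) / (real r * 3 ^ (?L + 2))"
    unfolding q l h tent_scale[OF d] tm_def by simp
  have Ln: "?L \<le> n" using Lc_le[of k] kn by simp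
  have p3: "(3::real) ^ (n + 2) = 3 ^ (n - ?L) * 3 ^ (?L + 2)"
    using Ln by (simp add: power_add[symmetric])
  have p2: "(2::real) ^ (n + 2) = 2 ^ (n - k) * 2 ^ (k + 2)"
    using kn by (simp add: power_add[symmetric])
  have p6: "(6::real) ^ (n + 2) = 3 ^ (n + 2) * 2 ^ (n + 2)"
    by (simp add: power_mult_distrib[symmetric])
  show ?thesis unfolding tk_def t w_def p6 p3 p2 using r
    by (simp add: field_simps power_divide)
qed


lemma Num_eq: assumes r: "r > 0"
  shows "real (Num (chi T) n p r) / real (Den n r) =
    real p / real r + Ofn (real p / real r) + (\<Sum>k<n. tk T (real p / real r) k)"
proof -
  have D: "real (Den n r) = real r * 6 ^ (n + 2)" by (simp add: Den_def)
  have D0: "real r * 6 ^ (n + 2) \<noteq> 0" using r by simp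
  have a1: "real (p * 6 ^ (n + 2)) / (real r * 6 ^ (n + 2)) = real p / real r" by simp
  have a2: "real (numO p r * (3 * 6 ^ n)) / (real r * 6 ^ (n + 2)) = Ofn (real p / real r)"
    unfolding Ofn_eq[OF r] using r by (simp add: field_simps power_add)
  have a3: "real (\<Sum>k<n. tm (chi T) k p r * 3 ^ (n - Lc k) * 2 ^ (n - k)) / (real r * 6 ^ (n + 2)) =
      (\<Sum>k<n. tk T (real p / real r) k)"
    unfolding of_nat_sum sum_divide_distrib by (rule sum.cong) (simp_all add: tk_eq[OF r])
  show ?thesis unfolding D Num_def of_nat_add add_divide_distrib a2 a3
    by (simp only: a1)
qed

lemma ff_approx: assumes r: "r > 0"
  shows "\<bar>real (Num (chi T) n p r) / real (Den n r) - ff T (real p / real r)\<bar> \<le> 1 / 2 ^ n"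
proof -
  let ?q = "real p / real r"
  have split: "suminf (tk T ?q) = (\<Sum>k. tk T ?q (k + n)) + (\<Sum>k<n. tk T ?q k)"
    by (rule suminf_split_initial_segment[OF tk_summable])
  have st: "summable (\<lambda>k. tk T ?q (k + n))" using tk_summable by (rule summable_ignore_initial_segment)
  have sw: "summable (\<lambda>k. w (k + n))" using w_summable by (rule summable_ignore_initial_segment)
  have t0: "0 \<le> (\<Sum>k. tk T ?q (k + n))" by (rule suminf_nonneg[OF st]) (simp add: tk_nonneg)
  have t1: "(\<Sum>k. tk T ?q (k + n)) \<le> (\<Sum>k. w (k + n))" by (rule suminf_le[OF _ st sw]) (simp add: tk_le)
  have wsum: "(\<lambda>k. w (k + n)) sums ((1/2) ^ (n + 1))"
  proof -
    have "(\<lambda>k. (1/2::real) ^ k) sums (1 / (1 - 1/2))" by (rule geometric_sums) simp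
    from sums_mult[OF this, of "(1/2) ^ (n + 2)"] have "(\<lambda>k. (1/2) ^ (n + 2) * (1/2::real) ^ k) sums ((1/2) ^ (n + 1))"
      by (simp add: power_add)
    moreover have "(\<lambda>k. (1/2) ^ (n + 2) * (1/2::real) ^ k) = (\<lambda>k. w (k + n))"
      by (rule ext) (simp add: w_def power_add[symmetric] add_ac)
    ultimately show ?thesis by simp
  qed
  have t2: "(\<Sum>k. w (k + n)) \<le> 1 / 2 ^ n" using sums_unique[OF wsum] by (simp add: power_add field_simps)
  have "ff T ?q - real (Num (chi T) n p r) / real (Den n r) = (\<Sum>k. tk T ?q (k + n))"
    unfolding Num_eq[OF r] ff_def GG_def split by simp
  then show ?thesis using t0 t1 t2 by (simp add: abs_minus_commute)
qed


lemma tri_mono: "m \<le> n \<Longrightarrow> triangle m \<le> triangle n"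
  by (induction n) (auto simp: le_Suc_eq)

lemma le_tri: "s \<le> triangle s"
  by (induction s) auto

lemma tri_exists: "\<exists>s. triangle s \<le> i \<and> i < triangle (Suc s)"
proof (induction i)
  case 0 then show ?case by (intro exI[of _ 0]) simp
next
  case (Suc i)
  then obtain s where s: "triangle s \<le> i" "i < triangle (Suc s)" by blast
  show ?case
  proof (cases "Suc i < triangle (Suc s)")
    case True with s show ?thesis by (intro exI[of _ s]) simp
  next
    case False
    then have "Suc i = triangle (Suc s)" using s by simp
    then show ?thesis by (intro exI[of _ "Suc s"]) simp
  qed
qed

lemma sqd_eq: assumes "triangle s \<le> i" "i < triangle (Suc s)" shows "sqd i = s"
proof -
  have "sqd i = (\<Sum>t<i+1. if t < s then 1 else 0)"
    unfolding sqd_def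
  proof (rule sum.cong[OF refl])
    fix t
    have "triangle (t + 1) \<le> i \<longleftrightarrow> t < s"
    proof
      assume a: "triangle (t + 1) \<le> i"
      show "t < s"
      proof (rule ccontr)
        assume "\<not> t < s"
        then have "triangle (Suc s) \<le> triangle (t + 1)" by (intro tri_mono) simp
        with a assms(2) show False by simp
      qed
    next
      assume "t < s"
      then have "triangle (t + 1) \<le> triangle s" by (intro tri_mono) simp
      with assms(1) show "triangle (t + 1) \<le> i" by simp
    qed
    then show "(if triangle (t + 1) - i = 0 then 1 else 0) = (if t < s then 1 else (0::nat))" by simp
  qed
  also have "\<dots> = min (i + 1) s" by (simp add: sum_if_less)
  also have "\<dots> = s" using le_tri[of s] assms(1) by simp
  finally show ?thesis .
qed

lemma pd_correct: "prod_decode i = (pd1 i, pd2 i)"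
proof -
  obtain s where s: "triangle s \<le> i" "i < triangle (Suc s)" using tri_exists by blast
  have sq: "sqd i = s" by (rule sqd_eq[OF s])
  define a where "a = i - triangle s"
  have i: "i = triangle s + a" using s a_def by simp
  have as: "a \<le> s" using s a_def by simp
  have "prod_decode i = prod_decode_aux s a" unfolding i by (rule prod_decode_triangle_add)
  also have "\<dots> = (a, s - a)" using as by (simp add: prod_decode_aux.simps)
  finally show ?thesis by (simp add: pd1_def pd2_def sq a_def)
qed

lemma int_decode_even: "int_decode (2 * N) = int N"
  by (simp add: int_decode_def sum_decode_def)

lemma rat_Aout: "rat_of_code (Aout g i n) = real (Num g n (pd1 i div 2) (pd2 i + 1)) / real (Den n (pd2 i + 1))"
proof -
  have "Den n (pd2 i + 1) > 0" by (simp add: Den_def)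
  then show ?thesis unfolding Aout_def rat_of_code_def by (simp add: int_decode_even)
qed

lemma rat_input: assumes "rat_of_code i \<in> {0..1}"
  shows "rat_of_code i = real (pd1 i div 2) / real (pd2 i + 1)"
proof -
  have ri: "rat_of_code i = real_of_int (int_decode (pd1 i)) / real (pd2 i + 1)"
    unfolding rat_of_code_def pd_correct by simp
  have "even (pd1 i)"
  proof (rule ccontr)
    assume "odd (pd1 i)"
    then have "int_decode (pd1 i) < 0" by (simp add: int_decode_def sum_decode_def)
    then have "rat_of_code i < 0" unfolding ri by (simp add: divide_neg_pos)
    with assms show False by simp
  qed
  then have "int_decode (pd1 i) = int (pd1 i div 2)" by (simp add: int_decode_def sum_decode_def)
  then show ?thesis unfolding ri by simp
qed

lemma fix_char: assumes x: "x \<in> {0..1}"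
  shows "ff T x = x \<longleftrightarrow> (x = 0 \<or> x = 1 \<or> (x \<in> cantor_set \<and> (\<exists>X. cantor X = x \<and> X \<in> paths T)))"
proof -
  have ffx: "ff T x = x \<longleftrightarrow> GG T x = 0" by (simp add: ff_def)
  show ?thesis
  proof
    assume "ff T x = x"
    then have G: "tent 0 (1/3) x = 0" "tent (2/3) 1 x = 0" "\<And>k. tent (lo T k) (hi T k) x = 0"
      unfolding ffx GG_zero by auto
    show "x = 0 \<or> x = 1 \<or> (x \<in> cantor_set \<and> (\<exists>X. cantor X = x \<and> X \<in> paths T))"
    proof (cases "x = 0 \<or> x = 1")
      case True then show ?thesis by blast
    next
      case False
      with x have x01: "0 < x" "x < 1" by auto
      have x13: "1/3 \<le> x" using G(1) x01 unfolding tent_zero by auto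
      have x23: "x \<le> 2/3" using G(2) x01 unfolding tent_zero by auto
      have J: "\<not> (lo T (str_code s) < x \<and> x < hi T (str_code s))" for s
        using G(3)[of "str_code s"] unfolding tent_zero .
      have gap: "\<not> (cr s + uu s < x \<and> x < cr s + 2 * uu s)" for s
        using J[of s] lohi_code[of T s] uu_pos[of s] by (cases "s \<in> T") auto
      obtain X where X: "cantor X = x" using construct[OF x13 x23 gap] by blast
      have "X \<in> paths T"
        unfolding paths_def
      proof (intro CollectI allI)
        fix n
        let ?s = "map X [0..<n]"
        show "?s \<in> T"
        proof (rule ccontr)
          assume nT: "?s \<notin> T"
          have "cr ?s \<le> x \<and> x \<le> cr ?s + 3 * uu ?s"
            using prefix_lemma[of X ?s] X by simp
          then have "lo T (str_code ?s) < x \<and> x < hi T (str_code ?s)"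
            using lohi_code[of T ?s] nT uu_pos[of ?s] by auto
          with J[of ?s] show False by blast
        qed
      qed
      with X show ?thesis unfolding cantor_set_def by blast
    qed
  next
    assume R: "x = 0 \<or> x = 1 \<or> (x \<in> cantor_set \<and> (\<exists>X. cantor X = x \<and> X \<in> paths T))"
    have "GG T x = 0"
      unfolding GG_zero
    proof (intro conjI allI)
      have "x = 0 \<or> x = 1 \<or> (\<exists>X. cantor X = x)" using R by blast
      then have xb: "x = 0 \<or> x = 1 \<or> (1/3 \<le> x \<and> x \<le> 2/3)" using cantor_bounds by blast
      show "tent 0 (1/3) x = 0" "tent (2/3) 1 x = 0"
        using xb unfolding tent_zero by auto
    next
      fix k
      obtain s where s: "str_code s = k" using str_code_surj by blast
      have b: "0 \<le> lo T k" "hi T k \<le> 1" using lohi_bounds[of T k] by auto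
      show "tent (lo T k) (hi T k) x = 0"
        unfolding tent_zero
      proof (cases "x = 0 \<or> x = 1")
        case True then show "\<not> (lo T k < x \<and> x < hi T k)" using b by auto
      next
        case False
        with R obtain X where X: "cantor X = x" "X \<in> paths T" by blast
        have lh: "lo T k = (if s \<in> T then cr s + uu s else cr s - uu s)"
             "hi T k = (if s \<in> T then cr s + 2 * uu s else cr s + 4 * uu s)"
          using lohi_code[of T s] s by auto
        show "\<not> (lo T k < x \<and> x < hi T k)"
        proof (cases "s \<in> T")
          case True
          then show ?thesis using gap_lemma[of s X] X lh by auto
        next
          case False
          have "map X [0..<length s] \<in> T" using X(2) unfolding paths_def by blast
          then have "map X [0..<length s] \<noteq> s" using False by auto
          then have "cantor X \<le> cr s - 3 * uu s \<or> cr s + 6 * uu s \<le> cantor X"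
            using prefix_lemma[of X s] by blast
          then show ?thesis using False X lh uu_pos[of s] by auto
        qed
      qed
    qed
    then show "ff T x = x" unfolding ffx .
  qed
qed


theorem lemma3p2:
  "\<exists>pA pD :: prog. \<forall>T. computable_tree T \<longrightarrow>
     (\<exists>(f :: real \<Rightarrow> real) A D.
        (\<forall>i n. ev (chi T) pA [i, n] (A i n)) \<and>
        (\<forall>m. ev (chi T) pD [m] (D m)) \<and>
        is_code f A D \<and>
        f ` {0..1} \<subseteq> {0..1} \<and>
        continuous_on {0..1} f \<and>
        mono_on {0..1} f \<and>
        (\<forall>x\<in>{0..1}. x \<le> f x) \<and>
        (\<forall>x\<in>{0..1}. f x = x \<longleftrightarrow>
            (x = 0 \<or> x = 1 \<or> (x \<in> cantor_set \<and> (\<exists>X. cantor X = x \<and> X \<in> paths T)))))"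
proof -
  obtain pA where pA: "\<forall>g xs. length xs = 2 \<longrightarrow> ev g pA xs (Aout g (xs ! 0) (xs ! 1))"
    using PR_Aout unfolding PR_def by blast
  have "PR 1 (\<lambda>g xs. Suc (xs ! 0))" by (intro PR_succ PR_proj) simp
  then obtain pD where pD: "\<forall>g xs. length xs = 1 \<longrightarrow> ev g pD xs (Suc (xs ! 0))"
    unfolding PR_def by blast
  show ?thesis
  proof (rule exI[of _ pA], rule exI[of _ pD], intro allI impI)
    fix T :: "bool list set"
    let ?f = "ff T" and ?A = "Aout (chi T)" and ?D = "\<lambda>m::nat. Suc m"
    have c1: "\<forall>i n. ev (chi T) pA [i, n] (?A i n)"
    proof (intro allI)
      fix i n show "ev (chi T) pA [i, n] (?A i n)" using pA[rule_format, of "[i, n]" "chi T"] by simp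
    qed
    have c2: "\<forall>m. ev (chi T) pD [m] (?D m)"
    proof
      fix m show "ev (chi T) pD [m] (?D m)" using pD[rule_format, of "[m]" "chi T"] by simp
    qed
    have c3: "is_code ?f ?A ?D"
      unfolding is_code_def
    proof (intro conjI allI impI)
      fix i n assume a: "rat_of_code i \<in> {0..1}"
      show "\<bar>rat_of_code (?A i n) - ?f (rat_of_code i)\<bar> \<le> 1 / 2 ^ n"
        unfolding rat_Aout rat_input[OF a] by (rule ff_approx) simp
    next
      fix m and x y :: real
      assume "x \<in> {0..1}" "y \<in> {0..1}" and xy: "\<bar>x - y\<bar> < 1 / 2 ^ Suc m"
      have "\<bar>?f x - ?f y\<bar> \<le> 2 * \<bar>x - y\<bar>" by (rule ff_lip)
      also have "\<dots> < 2 * (1 / 2 ^ Suc m)" using xy by simp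
      also have "\<dots> = 1 / 2 ^ m" by simp
      finally show "\<bar>?f x - ?f y\<bar> < 1 / 2 ^ m" .
    qed
    have c4: "?f ` {0..1} \<subseteq> {0..1}"
    proof
      fix z assume "z \<in> ?f ` {0..1}"
      then obtain x where x: "x \<in> {0..1}" "z = ?f x" by blast
      have "0 \<le> GG T x" "GG T x \<le> 1 - x" using GG_nonneg GG_le x by auto
      then show "z \<in> {0..1}" using x by (simp add: ff_def)
    qed
    have c5: "continuous_on {0..1} ?f"
      by (rule lipschitz_on_continuous_on[OF lipschitz_onI[of _ _ 2]]) (simp_all add: dist_real_def ff_lip)
    have c6: "mono_on {0..1} ?f" by (rule mono_onI) (rule ff_mono)
    have c7: "\<forall>x\<in>{0..1}. x \<le> ?f x" using GG_nonneg by (simp add: ff_def)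
    have c8: "\<forall>x\<in>{0..1}. ?f x = x \<longleftrightarrow> (x = 0 \<or> x = 1 \<or> (x \<in> cantor_set \<and> (\<exists>X. cantor X = x \<and> X \<in> paths T)))"
      using fix_char by blast
    show "\<exists>(f :: real \<Rightarrow> real) A D.
        (\<forall>i n. ev (chi T) pA [i, n] (A i n)) \<and>
        (\<forall>m. ev (chi T) pD [m] (D m)) \<and>
        is_code f A D \<and>
        f ` {0..1} \<subseteq> {0..1} \<and>
        continuous_on {0..1} f \<and>
        mono_on {0..1} f \<and>
        (\<forall>x\<in>{0..1}. x \<le> f x) \<and>
        (\<forall>x\<in>{0..1}. f x = x \<longleftrightarrow>
            (x = 0 \<or> x = 1 \<or> (x \<in> cantor_set \<and> (\<exists>X. cantor X = x \<and> X \<in> paths T))))"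
      using c1 c2 c3 c4 c5 c6 c7 c8 by blast
  qed
qed


end
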